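(* Let $p>3$ be a prime, let $m\le 2p$, and let $A_1,\ldots,A_m\subseteq[4p]$ with $|A_i|=2p$ for each $i$. Then there exists $C\subseteq[4p]$ with $|C|=3p$ such that $|C\cap A_i|\not\equiv0\pmod p$ for every $1\le i\le m$.
   Context: $[4p]=\{1,\dots,4p\}$. *)

theory Defs
  imports Main "HOL-Computational_Algebra.Primes"
begin

end

theory Submission
  imports Defs
begin

lemma double_count:
  assumes "finite U" "finite F" "\<forall>S\<in>F. S \<subseteq> U"
  shows "(\<Sum>x\<in>U. card {S\<in>F. x \<in> S}) = (\<Sum>S\<in>F. card S)"
proof -
  have "(\<Sum>x\<in>U. card {S\<in>F. x \<in> S}) = (\<Sum>x\<in>U. \<Sum>S\<in>F. if x \<in> S then 1 else 0)"
    using assms(2) by (simp add: sum.If_cases Int_def conj_commute)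
  also have "\<dots> = (\<Sum>S\<in>F. \<Sum>x\<in>U. if x \<in> S then 1 else 0)"
    by (rule sum.swap)
  also have "\<dots> = (\<Sum>S\<in>F. card S)"
  proof (rule sum.cong)
    fix S assume "S \<in> F"
    then have "S \<subseteq> U" using assms by auto
    then have "U \<inter> S = S" by auto
    then show "(\<Sum>x\<in>U. if x \<in> S then 1 else 0) = card S"
      using assms(1) by (simp add: sum.If_cases)
  qed simp
  finally show ?thesis .
qed

lemma good_point:
  assumes "finite U" "finite F" "F \<noteq> {}" "\<forall>S\<in>F. S \<subseteq> U \<and> S \<noteq> {} \<and> card U \<le> 2 * card S"
  shows "\<exists>x\<in>U. card F \<le> 2 * card {S\<in>F. x \<in> S}"
proof (rule ccontr)
  assume "\<not> ?thesis"
  then have lt: "\<forall>x\<in>U. 2 * card {S\<in>F. x \<in> S} < card F" by auto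
  obtain S0 where "S0 \<in> F" using assms(3) by auto
  have "U \<noteq> {}"
    using assms(4) \<open>S0 \<in> F\<close> by auto
  have "2 * (\<Sum>x\<in>U. card {S\<in>F. x \<in> S}) < card U * card F"
  proof -
    have "(\<Sum>x\<in>U. 2 * card {S\<in>F. x \<in> S}) < (\<Sum>x\<in>U. card F)"
      using sum_strict_mono[OF assms(1) \<open>U \<noteq> {}\<close>, of "\<lambda>x. 2 * card {S\<in>F. x \<in> S}" "\<lambda>_. card F"] lt by auto
    then show ?thesis by (simp add: sum_distrib_left)
  qed
  moreover have "card U * card F \<le> 2 * (\<Sum>S\<in>F. card S)"
  proof -
    have "(\<Sum>S\<in>F. card U) \<le> (\<Sum>S\<in>F. 2 * card S)"
      by (rule sum_mono) (use assms in auto)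
    then show ?thesis by (simp add: sum_distrib_left sum_distrib_right mult.commute)
  qed
  ultimately show False using double_count[OF assms(1,2)] assms(4) by auto
qed

lemma hitting:
  "\<And>U F. finite U \<Longrightarrow> finite F \<Longrightarrow> (\<forall>S\<in>F. S \<subseteq> U \<and> S \<noteq> {} \<and> card U \<le> 2 * card S)
   \<Longrightarrow> card F < 2 ^ k \<Longrightarrow> \<exists>D\<subseteq>U. card D \<le> k \<and> (\<forall>S\<in>F. S \<inter> D \<noteq> {})"
proof (induction k)
  case 0
  then show ?case by (intro exI[of _ "{}"]) auto
next
  case (Suc k U F)
  show ?case
  proof (cases "F = {}")
    case True
    then show ?thesis by (intro exI[of _ "{}"]) auto
  next
    case False
    obtain x where x: "x \<in> U" "card F \<le> 2 * card {S\<in>F. x \<in> S}"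
      using good_point[OF Suc.prems(1,2) False Suc.prems(3)] by auto
    define F' where "F' = {S\<in>F. x \<notin> S}"
    have split: "F = F' \<union> {S\<in>F. x \<in> S}" "F' \<inter> {S\<in>F. x \<in> S} = {}" unfolding F'_def by auto
    have "card F = card F' + card {S\<in>F. x \<in> S}"
      using split card_Un_disjoint[of F' "{S\<in>F. x \<in> S}"] Suc.prems(2) by (simp add: F'_def)
    then have cF': "card F' < 2 ^ k" using x Suc.prems(4) by simp
    have fin': "finite F'" using Suc.prems(2) unfolding F'_def by auto
    have cU: "card (U - {x}) = card U - 1" using x Suc.prems(1) by simp
    have P': "\<forall>S\<in>F'. S \<subseteq> U - {x} \<and> S \<noteq> {} \<and> card (U - {x}) \<le> 2 * card S"
      using Suc.prems(3) cU unfolding F'_def by auto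
    obtain D where D: "D \<subseteq> U - {x}" "card D \<le> k" "\<forall>S\<in>F'. S \<inter> D \<noteq> {}"
      using Suc.IH[OF _ fin' P' cF'] Suc.prems(1) by auto
    have fD: "finite D" using D(1) Suc.prems(1) finite_subset by blast
    show ?thesis
    proof (intro exI[of _ "insert x D"] conjI)
      show "insert x D \<subseteq> U" using D x by auto
      show "card (insert x D) \<le> Suc k" using D fD by (simp add: card_insert_if)
      show "\<forall>S\<in>F. S \<inter> insert x D \<noteq> {}"
        using D(3) unfolding F'_def by blast
    qed
  qed
qed

lemma pow_bound: "5 \<le> p \<Longrightarrow> 4 * p < (2::nat) ^ p"
proof (induction p rule: dec_induct)
  case base then show ?case by simp
next
  case (step n) then show ?case by simp
qed

theorem mainTheorem12:
  fixes p m :: nat and A :: "nat \<Rightarrow> nat set"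
  assumes "prime p" and "p > 3" and "m \<le> 2 * p"
    and "\<And>i. i \<in> {1..m} \<Longrightarrow> A i \<subseteq> {1..4 * p}"
    and "\<And>i. i \<in> {1..m} \<Longrightarrow> card (A i) = 2 * p"
  shows "\<exists>C. C \<subseteq> {1..4 * p} \<and> card C = 3 * p \<and>
           (\<forall>i \<in> {1..m}. \<not> p dvd card (C \<inter> A i))"
proof -
  define U where "U = {1..4*p}"
  define F where "F = A ` {1..m} \<union> (\<lambda>i. U - A i) ` {1..m}"
  have p5: "p \<ge> 5"
  proof -
    have "\<not> prime (4::nat)"
    proof
      assume "prime (4::nat)"
      moreover have "(2::nat) dvd 4" by simp
      ultimately show False using prime_nat_iff[of 4] by force
    qed
    then have "p \<noteq> 4" using assms(1) by auto
    then show ?thesis using assms(2) by linarith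
  qed
  have cardU: "card U = 4 * p" unfolding U_def by simp
  have finU: "finite U" unfolding U_def by simp
  have cF: "card F \<le> 2 * m"
  proof -
    have "card F \<le> card (A ` {1..m}) + card ((\<lambda>i. U - A i) ` {1..m})"
      unfolding F_def by (rule card_Un_le)
    also have "\<dots> \<le> m + m" using card_image_le[of "{1..m}"] by (intro add_mono) auto
    finally show ?thesis by simp
  qed
  have cF2: "card F < 2 ^ p" using cF assms(3) pow_bound[OF p5] by linarith
  have props: "\<forall>S\<in>F. S \<subseteq> U \<and> S \<noteq> {} \<and> card U \<le> 2 * card S"
  proof
    fix S assume "S \<in> F"
    then obtain i where i: "i \<in> {1..m}" "S = A i \<or> S = U - A i" unfolding F_def by auto
    have sub: "A i \<subseteq> U" using assms(4)[OF i(1)] unfolding U_def .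
    have cA: "card (A i) = 2 * p" using assms(5)[OF i(1)] .
    have cS: "card S = 2 * p"
      using i(2) proof
      assume "S = U - A i" then show ?thesis
        using card_Diff_subset[OF finite_subset[OF sub finU] sub] cA cardU by simp
    qed (use cA in simp)
    have "S \<subseteq> U" using i(2) sub by auto
    moreover have "S \<noteq> {}" using cS p5 by auto
    ultimately show "S \<subseteq> U \<and> S \<noteq> {} \<and> card U \<le> 2 * card S" using cS cardU by simp
  qed
  have finF: "finite F" unfolding F_def by simp
  obtain D where D: "D \<subseteq> U" "card D \<le> p" "\<forall>S\<in>F. S \<inter> D \<noteq> {}"
    using hitting[OF finU finF props cF2] by auto
  obtain D' where D': "D \<subseteq> D'" "D' \<subseteq> U" "card D' = p"
    using exists_subset_between[OF D(2) _ D(1) finU] cardU by auto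
  have finD': "finite D'" using D'(2) finU finite_subset by blast
  define C where "C = U - D'"
  show ?thesis
  proof (intro exI[of _ C] conjI ballI)
    show "C \<subseteq> {1..4 * p}" unfolding C_def U_def by auto
    show "card C = 3 * p" unfolding C_def using card_Diff_subset[OF finD' D'(2)] D'(3) cardU by simp
    fix i assume i: "i \<in> {1..m}"
    have sub: "A i \<subseteq> U" using assms(4)[OF i] unfolding U_def .
    have finA: "finite (A i)" using sub finU finite_subset by blast
    have h1: "A i \<inter> D' \<noteq> {}" using D(3) D'(1) i unfolding F_def by blast
    have h2: "(U - A i) \<inter> D' \<noteq> {}" using D(3) D'(1) i unfolding F_def by blast
    have eq: "C \<inter> A i = A i - (A i \<inter> D')" unfolding C_def using sub by auto
    have c1: "card (A i \<inter> D') \<ge> 1" using h1 finA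
      by (metis One_nat_def Suc_leI card_gt_0_iff finite_Int)
    have c2: "card (A i \<inter> D') < p"
    proof -
      have "A i \<inter> D' \<subset> D'" using h2 by auto
      then show ?thesis using psubset_card_mono[OF finD'] D'(3) by auto
    qed
    have "card (C \<inter> A i) = 2 * p - card (A i \<inter> D')"
      unfolding eq using card_Diff_subset[of "A i \<inter> D'" "A i"] finA assms(5)[OF i] by auto
    then have "p < card (C \<inter> A i)" "card (C \<inter> A i) < 2 * p" using c1 c2 by auto
    show "\<not> p dvd card (C \<inter> A i)"
    proof
      assume "p dvd card (C \<inter> A i)"
      then obtain k where k: "card (C \<inter> A i) = p * k" by (auto elim: dvdE)
      have "1 < k" using k \<open>p < card (C \<inter> A i)\<close> by (metis mult_less_cancel1 mult_1_right)
      moreover have "k < 2" using k \<open>card (C \<inter> A i) < 2 * p\<close> by (simp add: mult.commute)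
      ultimately show False by simp
    qed
  qed
qed

end
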